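(* Let $\mathcal P$ be a collection of permutations such that $\mathcal P_n=\mathcal P\cap\mathcal S_n$ is nonempty for infinitely many $n$. Suppose each $\mathcal P_n$ is a union of conjugacy classes of $\mathcal S_n$, and that the average number of fixed points of the elements of $\mathcal P_n$ is $o(n)$ as $n\to\infty$ (over those $n$ with $\mathcal P_n\neq\emptyset$). Then $\mathcal P$ is quasirandom, i.e. for each $k\ge1$, \[\lim_{n\to\infty}\max_{\tau}\left|\tilde p(n,\tau)-\frac1{k!}\right|=0,\] where the limit is over those $n$ with $\mathcal P_n\ne\emptyset$ and the maximum is over all sequences $\tau$ of $k$ distinct elements of $[n]$.
   Context: $\mathcal S_n$ is the set of all permutations of $[n]=\{1,\dots,n\}$. A permutation $\phi\in\mathcal S_n$ has a sequence $\tau=(\tau_1,\dots,\tau_k)$ of distinct elements of $[n]$ as a subsequence if $\tau$ is a subsequence of the word $\phi(1)\phi(2)\cdots\phi(n)$. For $\mathcal P_n\ne\emptyset$, $h(n,\tau)$ is the number of elements of $\mathcal P_n$ having $\tau$ as a subsequence and $\tilde p(n,\tau)=h(n,\tau)/|\mathcal P_n|$. *)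

theory Defs
  imports "HOL-Combinatorics.Permutations" "HOL-Library.Sublist" Complex_Main
begin

text \<open>Permutations of [n] = {1..n} are functions nat => nat that permute {1..n}.\<close>

definition word :: "(nat \<Rightarrow> nat) \<Rightarrow> nat \<Rightarrow> nat list" where
  "word \<phi> n = map \<phi> [1..<n+1]"

definition has_subseq :: "nat \<Rightarrow> (nat \<Rightarrow> nat) \<Rightarrow> nat list \<Rightarrow> bool" where
  "has_subseq n \<phi> \<tau> \<longleftrightarrow> subseq \<tau> (word \<phi> n)"

definition h :: "(nat \<Rightarrow> (nat \<Rightarrow> nat) set) \<Rightarrow> nat \<Rightarrow> nat list \<Rightarrow> nat" where
  "h P n \<tau> = card {\<phi> \<in> P n. has_subseq n \<phi> \<tau>}"

definition ptilde :: "(nat \<Rightarrow> (nat \<Rightarrow> nat) set) \<Rightarrow> nat \<Rightarrow> nat list \<Rightarrow> real" where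
  "ptilde P n \<tau> = real (h P n \<tau>) / real (card (P n))"

definition num_fixed :: "nat \<Rightarrow> (nat \<Rightarrow> nat) \<Rightarrow> nat" where
  "num_fixed n \<phi> = card {i \<in> {1..n}. \<phi> i = i}"

definition avg_fixed :: "(nat \<Rightarrow> (nat \<Rightarrow> nat) set) \<Rightarrow> nat \<Rightarrow> real" where
  "avg_fixed P n = (\<Sum>\<phi>\<in>P n. real (num_fixed n \<phi>)) / real (card (P n))"

end

theory Submission
  imports Defs "HOL-Combinatorics.Multiset_Permutations"
begin

definition lperm :: "nat list \<Rightarrow> nat list \<Rightarrow> nat \<Rightarrow> nat" where
  "lperm xs ys x = (case map_of (zip xs ys) x of None \<Rightarrow> x | Some y \<Rightarrow> y)"

lemma lperm_nth:
  assumes "distinct xs" "length xs = length ys" "i < length xs"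
  shows "lperm xs ys (xs ! i) = ys ! i"
  using map_of_zip_nth[of xs ys i] assms by (simp add: lperm_def)

lemma lperm_out:
  assumes "x \<notin> set xs" "length xs = length ys"
  shows "lperm xs ys x = x"
proof -
  have "fst ` set (zip xs ys) = set xs" using assms by (metis map_fst_zip set_map)
  then have "map_of (zip xs ys) x = None" using assms by (simp add: map_of_eq_None_iff)
  thus ?thesis by (simp add: lperm_def)
qed

lemma lperm_map:
  assumes "distinct xs" "length xs = length ys"
  shows "map (lperm xs ys) xs = ys"
  by (rule nth_equalityI) (use assms lperm_nth in auto)

lemma lperm_permutes:
  assumes "distinct xs" "distinct ys" "set xs = set ys"
  shows "lperm xs ys permutes set xs"
proof (rule bij_imp_permutes)
  have len: "length xs = length ys" using assms(1,2,3) by (metis distinct_card)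
  have img: "lperm xs ys ` set xs = set ys"
    using lperm_map[OF assms(1) len] by (metis list.set_map)
  have "card (lperm xs ys ` set xs) = card (set xs)"
    using img assms(1,2) len by (simp add: distinct_card)
  then have "inj_on (lperm xs ys) (set xs)"
    by (intro eq_card_imp_inj_on) simp_all
  then show "bij_betw (lperm xs ys) (set xs) (set xs)"
    using img assms by (simp add: bij_betw_def)
  show "\<And>x. x \<notin> set xs \<Longrightarrow> lperm xs ys x = x" using lperm_out len by blast
qed

lemma lperm_inv:
  assumes "distinct xs" "distinct ys" "set xs = set ys"
  shows "inv (lperm xs ys) = lperm ys xs"
proof (rule inv_unique_comp)
  have len: "length xs = length ys" using assms(1,2,3) by (metis distinct_card)
  show "lperm xs ys \<circ> lperm ys xs = id"
  proof
    fix x show "(lperm xs ys \<circ> lperm ys xs) x = id x"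
    proof (cases "x \<in> set ys")
      case True
      then obtain i where i: "i < length ys" "x = ys ! i" by (metis in_set_conv_nth)
      then show ?thesis using lperm_nth[of ys xs i] lperm_nth[of xs ys i] assms len by simp
    next
      case False
      then show ?thesis using lperm_out[of x ys xs] lperm_out[of x xs ys] assms len by simp
    qed
  qed
  show "lperm ys xs \<circ> lperm xs ys = id"
  proof
    fix x show "(lperm ys xs \<circ> lperm xs ys) x = id x"
    proof (cases "x \<in> set xs")
      case True
      then obtain i where i: "i < length xs" "x = xs ! i" by (metis in_set_conv_nth)
      then show ?thesis using lperm_nth[of ys xs i] lperm_nth[of xs ys i] assms len by simp
    next
      case False
      then show ?thesis using lperm_out[of x ys xs] lperm_out[of x xs ys] assms len by simp
    qed
  qed
qed

lemma subseq_sorted_wrt: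
  "subseq xs ys \<Longrightarrow> sorted_wrt R ys \<Longrightarrow> sorted_wrt R xs"
proof (induction rule: list_emb.induct)
  case (list_emb_Cons xs ys y) then show ?case by simp
next
  case (list_emb_Cons2 x y xs ys) then show ?case
    by (auto dest: list_emb_set)
qed simp

lemma t4: "\<psi> permutes {1..n} \<Longrightarrow> set \<tau> \<subseteq> {1..n} \<Longrightarrow> set (map (inv \<psi>) \<tau>) \<subseteq> {1..n}"
proof
  fix x assume a: "\<psi> permutes {1..n}" "set \<tau> \<subseteq> {1..n}" "x \<in> set (map (inv \<psi>) \<tau>)"
  then obtain t where t: "t \<in> set \<tau>" "x = inv \<psi> t" by auto
  have "inv \<psi> permutes {1..n}" using a(1) by (rule permutes_inv)
  then show "x \<in> {1..n}" using permutes_in_image[of "inv \<psi>" "{1..n}" t] t a(2) by auto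
qed

lemma has_subseq_iff:
  assumes "\<psi> permutes {1..n}" "set \<tau> \<subseteq> {1..n}"
  shows "has_subseq n \<psi> \<tau> \<longleftrightarrow> sorted_wrt (<) (map (inv \<psi>) \<tau>)"
proof -
  define L where "L = [1..<n+1]"
  have bij: "bij \<psi>" using assms(1) permutes_bij by blast
  have hs: "has_subseq n \<psi> \<tau> \<longleftrightarrow> subseq \<tau> (map \<psi> L)"
    unfolding has_subseq_def word_def L_def by (rule refl)
  have sL: "sorted_wrt (<) L" unfolding L_def by (rule sorted_wrt_upt)
  have sL2: "sorted L" unfolding L_def by (rule sorted_upt)
  have setL: "set L = {1..n}" unfolding L_def by auto
  have m1: "map (inv \<psi>) (map \<psi> L) = L"
    using bij by (simp add: bij_is_inj)
  have "\<psi> \<circ> inv \<psi> = id" using bij bij_is_surj surj_iff by blast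
  then have m2: "map \<psi> (map (inv \<psi>) \<tau>) = \<tau>" by simp
  show ?thesis
  proof
    assume "has_subseq n \<psi> \<tau>"
    then have "subseq \<tau> (map \<psi> L)" using hs by blast
    then have "subseq (map (inv \<psi>) \<tau>) (map (inv \<psi>) (map \<psi> L))"
      by (rule subseq_map)
    then have sub: "subseq (map (inv \<psi>) \<tau>) L" unfolding m1 .
    show "sorted_wrt (<) (map (inv \<psi>) \<tau>)"
      using subseq_sorted_wrt[OF sub sL] .
  next
    assume s: "sorted_wrt (<) (map (inv \<psi>) \<tau>)"
    have "set (map (inv \<psi>) \<tau>) \<subseteq> set L" using t4[OF assms] setL by simp
    then have "subseq (map (inv \<psi>) \<tau>) L"
      using s sL2 by (intro sorted_subset_imp_subseq)
    then have "subseq (map \<psi> (map (inv \<psi>) \<tau>)) (map \<psi> L)" by (rule subseq_map)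
    then show "has_subseq n \<psi> \<tau>" using hs m2 by simp
  qed
qed

lemma conj_inv:
  assumes "\<sigma> permutes S" "\<psi> permutes S"
  shows "inv (\<sigma> \<circ> \<psi> \<circ> inv \<sigma>) = \<sigma> \<circ> inv \<psi> \<circ> inv \<sigma>"
proof -
  have b: "bij \<sigma>" "bij \<psi>" "bij (inv \<sigma>)" using assms by (auto intro: permutes_bij permutes_inv)
  have "inv (\<sigma> \<circ> \<psi> \<circ> inv \<sigma>) = inv (inv \<sigma>) \<circ> inv (\<sigma> \<circ> \<psi>)"
    using b by (simp add: o_inv_distrib bij_comp)
  also have "\<dots> = \<sigma> \<circ> (inv \<psi> \<circ> inv \<sigma>)" using b by (simp add: o_inv_distrib inv_inv_eq)
  finally show ?thesis by (simp add: o_assoc)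
qed

lemma conj_ps:
  assumes "\<sigma> permutes S" "\<psi> permutes S" "\<And>t. t \<in> set \<tau> \<Longrightarrow> \<sigma> t = t"
  shows "map (inv (\<sigma> \<circ> \<psi> \<circ> inv \<sigma>)) \<tau> = map \<sigma> (map (inv \<psi>) \<tau>)"
proof -
  have "\<And>t. t \<in> set \<tau> \<Longrightarrow> inv \<sigma> t = t"
    using assms(1,3) by (metis permutes_inverses(2))
  then show ?thesis using conj_inv[OF assms(1,2)] by simp
qed

lemma conj_back:
  assumes "A \<circ> B = id" "x = B \<circ> y \<circ> A"
  shows "A \<circ> x \<circ> B = y"
proof
  fix z
  have "\<And>w. A (B w) = w" using assms(1) by (metis comp_apply id_apply)
  then show "(A \<circ> x \<circ> B) z = y z" using assms(2) by simp
qed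

locale orb =
  fixes Q :: "(nat \<Rightarrow> nat) set" and n :: nat and \<tau> :: "nat list"
  assumes Qsub: "Q \<subseteq> {\<phi>. \<phi> permutes {1..n}}"
    and Qconj: "\<And>\<phi> \<sigma>. \<phi> \<in> Q \<Longrightarrow> \<sigma> permutes {1..n} \<Longrightarrow> \<sigma> \<circ> \<phi> \<circ> inv \<sigma> \<in> Q"
    and tdist: "distinct \<tau>" and tsub: "set \<tau> \<subseteq> {1..n}"
begin

definition ps where "ps \<psi> = map (inv \<psi>) \<tau>"
definition G where "G = {\<psi>\<in>Q. set (ps \<psi>) \<inter> set \<tau> = {}}"
definition I where "I = {\<psi>\<in>G. sorted_wrt (<) (ps \<psi>)}"
definition can where "can \<psi> = lperm (ps \<psi>) (sort (ps \<psi>)) \<circ> \<psi> \<circ> inv (lperm (ps \<psi>) (sort (ps \<psi>)))"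
definition fib where "fib \<psi>0 = {\<psi>\<in>G. can \<psi> = \<psi>0}"

lemma finQ: "finite Q"
  using Qsub finite_permutations[of "{1..n}"] by (auto intro: finite_subset)

lemma ps_distinct: "\<psi> \<in> Q \<Longrightarrow> distinct (ps \<psi>)"
  unfolding ps_def using Qsub tdist
  by (auto simp: distinct_map intro!: inj_on_subset[OF bij_is_inj] permutes_bij permutes_inv)

lemma ps_sub: "\<psi> \<in> Q \<Longrightarrow> set (ps \<psi>) \<subseteq> {1..n}"
  unfolding ps_def using Qsub tsub t4 by blast

lemma len_ps: "length (ps \<psi>) = length \<tau>" by (simp add: ps_def)

lemma lperm_ok:
  assumes "distinct xs" "distinct ys" "set xs = set ys" "set xs \<subseteq> {1..n}" "set xs \<inter> set \<tau> = {}"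
  shows "lperm xs ys permutes {1..n}" "\<And>t. t \<in> set \<tau> \<Longrightarrow> lperm xs ys t = t"
proof -
  show "lperm xs ys permutes {1..n}" using lperm_permutes[OF assms(1-3)] assms(4) permutes_subset by blast
  have len: "length xs = length ys" using assms(1,2,3) by (metis distinct_card)
  show "\<And>t. t \<in> set \<tau> \<Longrightarrow> lperm xs ys t = t" using lperm_out[OF _ len] assms(5) by blast
qed

lemma conj_mem:
  assumes "\<psi> \<in> Q" "distinct xs" "distinct ys" "set xs = set ys" "set xs \<subseteq> {1..n}" "set xs \<inter> set \<tau> = {}"
  shows "lperm xs ys \<circ> \<psi> \<circ> inv (lperm xs ys) \<in> Q"
    "ps (lperm xs ys \<circ> \<psi> \<circ> inv (lperm xs ys)) = map (lperm xs ys) (ps \<psi>)"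
proof -
  note lo = lperm_ok[OF assms(2-6)]
  show "lperm xs ys \<circ> \<psi> \<circ> inv (lperm xs ys) \<in> Q" using Qconj assms(1) lo(1) by blast
  show "ps (lperm xs ys \<circ> \<psi> \<circ> inv (lperm xs ys)) = map (lperm xs ys) (ps \<psi>)"
    unfolding ps_def using conj_ps[OF lo(1), of \<psi> \<tau>] lo(2) assms(1) Qsub by blast
qed

lemma can_props:
  assumes "\<psi> \<in> G"
  shows "can \<psi> \<in> I" "ps (can \<psi>) = sort (ps \<psi>)"
proof -
  let ?p = "ps \<psi>"
  have Q: "\<psi> \<in> Q" and dis: "set ?p \<inter> set \<tau> = {}" using assms by (auto simp: G_def)
  have d: "distinct ?p" using ps_distinct[OF Q] .
  have d2: "distinct (sort ?p)" using d by simp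
  have st: "set ?p = set (sort ?p)" by simp
  have len: "length ?p = length (sort ?p)" by simp
  note cm = conj_mem[OF Q d d2 st ps_sub[OF Q] dis]
  show e: "ps (can \<psi>) = sort ?p" unfolding can_def cm(2) using lperm_map[OF d len] .
  have "can \<psi> \<in> G" using cm(1) e dis unfolding G_def can_def by auto
  moreover have "sorted_wrt (<) (ps (can \<psi>))" unfolding e using d
    by (simp add: strict_sorted_iff)
  ultimately show "can \<psi> \<in> I" unfolding I_def by blast
qed

lemma fib_card:
  assumes "\<psi>0 \<in> I"
  shows "card (fib \<psi>0) = fact (length \<tau>)"
proof -
  let ?q = "ps \<psi>0"
  have Q0: "\<psi>0 \<in> Q" and dis0: "set ?q \<inter> set \<tau> = {}" and sq: "sorted_wrt (<) ?q"
    using assms by (auto simp: I_def G_def)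
  have dq: "distinct ?q" using ps_distinct[OF Q0] .
  define f where "f zs = lperm ?q zs \<circ> \<psi>0 \<circ> inv (lperm ?q zs)" for zs
  have "bij_betw f (permutations_of_set (set ?q)) (fib \<psi>0)"
  proof (rule bij_betw_byWitness[where f' = ps])
    show "\<forall>zs\<in>permutations_of_set (set ?q). ps (f zs) = zs"
    proof
      fix zs assume "zs \<in> permutations_of_set (set ?q)"
      then have z: "distinct zs" "set ?q = set zs" by (auto simp: permutations_of_set_def)
      have len: "length ?q = length zs" using z dq by (metis distinct_card)
      show "ps (f zs) = zs" unfolding f_def
        using conj_mem(2)[OF Q0 dq z(1) z(2) ps_sub[OF Q0] dis0] lperm_map[OF dq len] by simp
    qed
    show "f ` permutations_of_set (set ?q) \<subseteq> fib \<psi>0"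
    proof
      fix \<psi> assume "\<psi> \<in> f ` permutations_of_set (set ?q)"
      then obtain zs where zs: "zs \<in> permutations_of_set (set ?q)" and psi: "\<psi> = f zs" by blast
      then have z: "distinct zs" "set ?q = set zs" by (auto simp: permutations_of_set_def)
      have len: "length ?q = length zs" using z dq by (metis distinct_card)
      note cm = conj_mem[OF Q0 dq z(1) z(2) ps_sub[OF Q0] dis0]
      have pz: "ps \<psi> = zs" unfolding psi f_def cm(2) using lperm_map[OF dq len] .
      have G: "\<psi> \<in> G" unfolding G_def using cm(1) pz z dis0 psi f_def by auto
      have so: "sort zs = ?q"
        using sq dq z by (metis sorted_distinct_set_unique sorted_sort distinct_sort set_sort strict_sorted_iff)
      have iv: "inv (lperm ?q zs) = lperm zs ?q" using lperm_inv[OF dq z(1) z(2)] .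
      have bj: "bij (lperm ?q zs)" using lperm_permutes[OF dq z(1) z(2)] permutes_bij by blast
      have ii: "inv (lperm zs ?q) = lperm ?q zs" using lperm_inv[OF z(1) dq z(2)[symmetric]] .
      have iv2: "lperm zs ?q \<circ> lperm ?q zs = id" using bj iv by (metis bij_is_inj inv_o_cancel)
      have iv3: "lperm ?q zs \<circ> lperm zs ?q = id" using bj iv by (metis bij_is_surj surj_iff)
      have "can \<psi> = lperm zs ?q \<circ> (lperm ?q zs \<circ> \<psi>0 \<circ> lperm zs ?q) \<circ> lperm ?q zs"
        unfolding can_def pz so ii unfolding psi f_def iv by simp
      also have "\<dots> = (lperm zs ?q \<circ> lperm ?q zs) \<circ> \<psi>0 \<circ> (lperm zs ?q \<circ> lperm ?q zs)"
        by (simp add: o_assoc)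
      also have "\<dots> = \<psi>0" using iv2 by simp
      finally show "\<psi> \<in> fib \<psi>0" using G unfolding fib_def by blast
    qed
    show "\<forall>\<psi>\<in>fib \<psi>0. f (ps \<psi>) = \<psi>"
    proof
      fix \<psi> assume "\<psi> \<in> fib \<psi>0"
      then have G: "\<psi> \<in> G" and c: "can \<psi> = \<psi>0" by (auto simp: fib_def)
      let ?p = "ps \<psi>"
      have Q: "\<psi> \<in> Q" using G by (simp add: G_def)
      have so: "sort ?p = ?q" using can_props(2)[OF G] c by simp
      have dp: "distinct ?p" using ps_distinct[OF Q] .
      have sp: "set ?p = set ?q" using so by (metis set_sort)
      have ii: "inv (lperm ?p ?q) = lperm ?q ?p" using lperm_inv[OF dp dq sp] .
      have bj: "bij (lperm ?p ?q)" using lperm_permutes[OF dp dq sp] permutes_bij by blast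
      have iv2: "lperm ?q ?p \<circ> lperm ?p ?q = id" using bj ii by (metis bij_is_inj inv_o_cancel)
      have iv3: "lperm ?p ?q \<circ> lperm ?q ?p = id" using bj ii by (metis bij_is_surj surj_iff)
      have iq: "inv (lperm ?q ?p) = lperm ?p ?q" using lperm_inv[OF dq dp sp[symmetric]] .
      have e: "\<psi>0 = lperm ?p ?q \<circ> \<psi> \<circ> lperm ?q ?p" using c unfolding can_def so ii by simp
      have "f ?p = lperm ?q ?p \<circ> \<psi>0 \<circ> lperm ?p ?q" by (simp only: f_def iq)
      then show "f ?p = \<psi>" using conj_back[OF iv2 e] by simp
    qed
    show "ps ` fib \<psi>0 \<subseteq> permutations_of_set (set ?q)"
    proof
      fix zs assume "zs \<in> ps ` fib \<psi>0"
      then obtain \<psi> where "\<psi> \<in> fib \<psi>0" "zs = ps \<psi>" by blast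
      then have G: "\<psi> \<in> G" and c: "can \<psi> = \<psi>0" and zs: "zs = ps \<psi>" by (auto simp: fib_def)
      have Q: "\<psi> \<in> Q" using G by (simp add: G_def)
      have "ps (can \<psi>) = sort (ps \<psi>)" by (rule can_props(2)[OF G])
      then have so: "sort zs = ?q" unfolding c zs[symmetric] by (rule sym)
      have dz: "distinct zs" using ps_distinct[OF Q] zs by simp
      have "set (sort zs) = set ?q" using so by simp
      then have "set zs = set ?q" by simp
      then show "zs \<in> permutations_of_set (set ?q)"
        using dz by (simp add: permutations_of_set_def)
    qed
  qed
  then have "card (fib \<psi>0) = card (permutations_of_set (set ?q))" by (simp add: bij_betw_same_card)
  also have "\<dots> = fact (length \<tau>)" using dq by (simp add: distinct_card len_ps)
  finally show ?thesis .
qed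

lemma card_G: "card G = fact (length \<tau>) * card I"
proof -
  have finG: "finite G" using finQ by (simp add: G_def)
  have finI: "finite I" using finG by (simp add: I_def)
  have "G = (\<Union>\<psi>0\<in>I. fib \<psi>0)" using can_props(1) by (auto simp: fib_def I_def)
  moreover have "card (\<Union>\<psi>0\<in>I. fib \<psi>0) = (\<Sum>\<psi>0\<in>I. card (fib \<psi>0))"
  proof (rule card_UN_disjoint[OF finI])
    show "\<forall>i\<in>I. finite (fib i)" using finG by (auto simp: fib_def)
    show "\<forall>i\<in>I. \<forall>j\<in>I. i \<noteq> j \<longrightarrow> fib i \<inter> fib j = {}" by (auto simp: fib_def)
  qed
  ultimately have "card G = (\<Sum>\<psi>0\<in>I. card (fib \<psi>0))" by (rule ssubst)
  also have "\<dots> = (\<Sum>\<psi>0\<in>I. fact (length \<tau>))" using fib_card by simp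
  finally show ?thesis by simp
qed

end

locale cls =
  fixes Q :: "(nat \<Rightarrow> nat) set" and n :: nat
  assumes Qsub: "Q \<subseteq> {\<phi>. \<phi> permutes {1..n}}"
    and Qconj: "\<And>\<phi> \<sigma>. \<phi> \<in> Q \<Longrightarrow> \<sigma> permutes {1..n} \<Longrightarrow> \<sigma> \<circ> \<phi> \<circ> inv \<sigma> \<in> Q"
begin

definition cnt where "cnt a b = card {\<psi>\<in>Q. \<psi> a = b}"

lemma finQ: "finite Q"
  using Qsub finite_permutations[of "{1..n}"] by (auto intro: finite_subset)

lemma sym_gen:
  assumes "\<sigma> permutes {1..n}" "\<sigma> a = a'" "\<sigma> b = b'"
  shows "cnt a b \<le> cnt a' b'"
proof -
  let ?c = "\<lambda>\<psi>. \<sigma> \<circ> \<psi> \<circ> inv \<sigma>"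
  have bij: "bij \<sigma>" using assms(1) permutes_bij by blast
  have ia: "inv \<sigma> a' = a" using assms(1,2) by (metis permutes_inverses(2))
  have "inj_on ?c {\<psi>\<in>Q. \<psi> a = b}"
  proof
    fix x y assume "x \<in> {\<psi>\<in>Q. \<psi> a = b}" "y \<in> {\<psi>\<in>Q. \<psi> a = b}" "?c x = ?c y"
    then have "inv \<sigma> \<circ> ?c x \<circ> \<sigma> = inv \<sigma> \<circ> ?c y \<circ> \<sigma>" by simp
    moreover have "\<And>z. inv \<sigma> \<circ> ?c z \<circ> \<sigma> = z"
      using bij by (simp add: fun_eq_iff bij_is_inj)
    ultimately show "x = y" by simp
  qed
  moreover have "?c ` {\<psi>\<in>Q. \<psi> a = b} \<subseteq> {\<psi>\<in>Q. \<psi> a' = b'}"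
    using Qconj assms ia by auto
  moreover have "finite {\<psi>\<in>Q. \<psi> a' = b'}" using finQ by simp
  ultimately show ?thesis unfolding cnt_def by (rule card_inj_on_le)
qed

lemma cnt_fix_eq:
  assumes "a \<in> {1..n}" "b \<in> {1..n}"
  shows "cnt a a = cnt b b"
  using sym_gen[OF permutes_swap_id[OF assms], of a b a b]
    sym_gen[OF permutes_swap_id[OF assms(2,1)], of b a b a]
  by simp

lemma cnt_off_eq:
  assumes "a \<in> {1..n}" "b \<in> {1..n}" "b' \<in> {1..n}" "a \<noteq> b" "a \<noteq> b'"
  shows "cnt a b = cnt a b'"
  using sym_gen[OF permutes_swap_id[OF assms(2,3)], of a a b b']
    sym_gen[OF permutes_swap_id[OF assms(3,2)], of a a b' b] assms(4,5)
  by simp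

lemma cnt_sum: "cnt a b = (\<Sum>\<psi>\<in>Q. of_bool (\<psi> a = b))"
proof -
  have "{\<psi>\<in>Q. \<psi> a = b} = Q \<inter> {\<psi>. \<psi> a = b}" by blast
  then show ?thesis unfolding cnt_def using finQ by simp
qed

lemma sum_fixed:
  "(\<Sum>b\<in>{1..n}. cnt b b) = (\<Sum>\<psi>\<in>Q. num_fixed n \<psi>)"
proof -
  have "(\<Sum>b\<in>{1..n}. cnt b b) = (\<Sum>b\<in>{1..n}. \<Sum>\<psi>\<in>Q. of_bool (\<psi> b = b))"
    by (simp add: cnt_sum)
  also have "\<dots> = (\<Sum>\<psi>\<in>Q. \<Sum>b\<in>{1..n}. of_bool (\<psi> b = b))" by (rule sum.swap)
  also have "\<dots> = (\<Sum>\<psi>\<in>Q. num_fixed n \<psi>)"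
  proof (rule sum.cong)
    fix \<psi> assume "\<psi> \<in> Q"
    have "{i \<in> {1..n}. \<psi> i = i} = {1..n} \<inter> {i. \<psi> i = i}" by blast
    then show "(\<Sum>b\<in>{1..n}. of_bool (\<psi> b = b)) = num_fixed n \<psi>"
      unfolding num_fixed_def by simp
  qed simp
  finally show ?thesis .
qed

lemma cnt_fix_val:
  assumes "a \<in> {1..n}"
  shows "real n * real (cnt a a) = (\<Sum>\<psi>\<in>Q. real (num_fixed n \<psi>))"
proof -
  have "(\<Sum>b\<in>{1..n}. cnt b b) = (\<Sum>b\<in>{1..n}. cnt a a)"
    using cnt_fix_eq[OF _ assms] by (intro sum.cong) auto
  then have "n * cnt a a = (\<Sum>\<psi>\<in>Q. num_fixed n \<psi>)" using sum_fixed by simp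
  then have "real (n * cnt a a) = real (\<Sum>\<psi>\<in>Q. num_fixed n \<psi>)" by simp
  then show ?thesis by simp
qed

lemma cnt_off_val:
  assumes "a \<in> {1..n}" "b \<in> {1..n}" "a \<noteq> b"
  shows "(n - 1) * cnt a b \<le> card Q"
proof -
  have "(\<Sum>b'\<in>{1..n}-{a}. cnt a b') = (\<Sum>b'\<in>{1..n}-{a}. cnt a b)"
    using cnt_off_eq[OF assms(1,2) _ assms(3)] by (intro sum.cong) auto
  then have "(n - 1) * cnt a b = (\<Sum>b'\<in>{1..n}-{a}. cnt a b')" using assms(1) by simp
  also have "\<dots> = (\<Sum>\<psi>\<in>Q. \<Sum>b'\<in>{1..n}-{a}. of_bool (\<psi> a = b'))"
    by (simp add: cnt_sum sum.swap[of _ Q])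
  also have "\<dots> \<le> (\<Sum>\<psi>\<in>Q. 1)"
  proof (rule sum_mono)
    fix \<psi> assume "\<psi> \<in> Q"
    have "(\<Sum>b'\<in>{1..n}-{a}. of_bool (\<psi> a = b')) = card (({1..n}-{a}) \<inter> {b'. \<psi> a = b'})"
      by simp
    also have "\<dots> = card (({1..n}-{a}) \<inter> {\<psi> a})"
      by (rule arg_cong[where f=card]) blast
    also have "\<dots> \<le> card {\<psi> a}" by (rule card_mono) auto
    finally show "(\<Sum>b'\<in>{1..n}-{a}. of_bool (\<psi> a = b')) \<le> (1::nat)" by simp
  qed
  finally show ?thesis by simp
qed

end

context orb
begin

lemma bad_sub: "Q - G \<subseteq> (\<Union>a\<in>set \<tau>. \<Union>b\<in>set \<tau>. {\<psi>\<in>Q. \<psi> a = b})"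
proof
  fix \<psi> assume "\<psi> \<in> Q - G"
  then have Q: "\<psi> \<in> Q" and "set (ps \<psi>) \<inter> set \<tau> \<noteq> {}" by (auto simp: G_def)
  then obtain t where t: "t \<in> set \<tau>" "inv \<psi> t \<in> set \<tau>" by (auto simp: ps_def)
  have "\<psi> permutes {1..n}" using Q Qsub by blast
  then have "\<psi> (inv \<psi> t) = t" by (rule permutes_inverses(1))
  then show "\<psi> \<in> (\<Union>a\<in>set \<tau>. \<Union>b\<in>set \<tau>. {\<psi>\<in>Q. \<psi> a = b})" using t Q by blast
qed

lemma card_bad: "card (Q - G) \<le> (\<Sum>a\<in>set \<tau>. \<Sum>b\<in>set \<tau>. card {\<psi>\<in>Q. \<psi> a = b})"
proof -
  have "card (Q - G) \<le> card (\<Union>a\<in>set \<tau>. \<Union>b\<in>set \<tau>. {\<psi>\<in>Q. \<psi> a = b})"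
    by (rule card_mono) (use finQ bad_sub in auto)
  also have "\<dots> \<le> (\<Sum>a\<in>set \<tau>. card (\<Union>b\<in>set \<tau>. {\<psi>\<in>Q. \<psi> a = b}))"
    by (rule card_UN_le) simp
  also have "\<dots> \<le> (\<Sum>a\<in>set \<tau>. \<Sum>b\<in>set \<tau>. card {\<psi>\<in>Q. \<psi> a = b})"
    by (rule sum_mono) (rule card_UN_le, simp)
  finally show ?thesis .
qed

lemma cnt_bound:
  assumes "a \<in> set \<tau>" "b \<in> set \<tau>" "n \<ge> 2"
  shows "real (card {\<psi>\<in>Q. \<psi> a = b}) \<le>
           (\<Sum>\<psi>\<in>Q. real (num_fixed n \<psi>)) / real n + real (card Q) / (real n - 1)"
proof -
  interpret c: cls Q n by unfold_locales (use Qsub Qconj in auto)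
  have a: "a \<in> {1..n}" and b: "b \<in> {1..n}" using assms tsub by auto
  have S0: "0 \<le> (\<Sum>\<psi>\<in>Q. real (num_fixed n \<psi>)) / real n" by (intro divide_nonneg_nonneg sum_nonneg) auto
  have Q0: "0 \<le> real (card Q) / (real n - 1)" using assms(3) by simp
  show ?thesis
  proof (cases "a = b")
    case True
    have "real n * real (c.cnt a a) = (\<Sum>\<psi>\<in>Q. real (num_fixed n \<psi>))" by (rule c.cnt_fix_val[OF a])
    then have "real (c.cnt a a) = (\<Sum>\<psi>\<in>Q. real (num_fixed n \<psi>)) / real n"
      using assms(3) by (simp add: field_simps)
    then show ?thesis using True Q0 by (simp add: c.cnt_def)
  next
    case False
    have "(n - 1) * c.cnt a b \<le> card Q" by (rule c.cnt_off_val[OF a b False])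
    then have "real (n - 1) * real (c.cnt a b) \<le> real (card Q)" by (metis of_nat_le_iff of_nat_mult)
    then have "(real n - 1) * real (c.cnt a b) \<le> real (card Q)" using assms(3) by (simp add: of_nat_diff)
    then have "real (c.cnt a b) \<le> real (card Q) / (real n - 1)"
      using assms(3) by (simp add: field_simps)
    then show ?thesis using S0 by (simp add: c.cnt_def)
  qed
qed

lemma bad_bound:
  assumes "n \<ge> 2"
  shows "real (card (Q - G)) \<le> real (length \<tau>)^2 *
           ((\<Sum>\<psi>\<in>Q. real (num_fixed n \<psi>)) / real n + real (card Q) / (real n - 1))"
proof -
  let ?B = "(\<Sum>\<psi>\<in>Q. real (num_fixed n \<psi>)) / real n + real (card Q) / (real n - 1)"
  have "real (card (Q - G)) \<le> real (\<Sum>a\<in>set \<tau>. \<Sum>b\<in>set \<tau>. card {\<psi>\<in>Q. \<psi> a = b})"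
    using card_bad by linarith
  also have "\<dots> = (\<Sum>a\<in>set \<tau>. \<Sum>b\<in>set \<tau>. real (card {\<psi>\<in>Q. \<psi> a = b}))" by simp
  also have "\<dots> \<le> (\<Sum>a\<in>set \<tau>. \<Sum>b\<in>set \<tau>. ?B)"
    by (intro sum_mono cnt_bound assms)
  also have "\<dots> = real (card (set \<tau>))^2 * ?B" by (simp add: power2_eq_square)
  also have "card (set \<tau>) = length \<tau>" using tdist by (simp add: distinct_card)
  finally show ?thesis .
qed

lemma ptilde_bound:
  assumes "n \<ge> 2" "Q \<noteq> {}"
  shows "\<bar>real (card {\<psi>\<in>Q. has_subseq n \<psi> \<tau>}) / real (card Q) - 1 / fact (length \<tau>)\<bar>
          \<le> real (length \<tau>)^2 *
           ((\<Sum>\<psi>\<in>Q. real (num_fixed n \<psi>)) / real (card Q) / real n + 1 / (real n - 1))"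
proof -
  let ?S = "{\<psi>\<in>Q. has_subseq n \<psi> \<tau>}"
  let ?BS = "{\<psi>\<in>Q - G. has_subseq n \<psi> \<tau>}"
  have finG: "finite G" using finQ by (simp add: G_def)
  have hs: "\<And>\<psi>. \<psi> \<in> Q \<Longrightarrow> has_subseq n \<psi> \<tau> \<longleftrightarrow> sorted_wrt (<) (ps \<psi>)"
    unfolding ps_def using Qsub tsub has_subseq_iff by blast
  have "?S = I \<union> ?BS" using hs by (auto simp: I_def G_def)
  moreover have "I \<inter> ?BS = {}" by (auto simp: I_def)
  moreover have "finite I" "finite ?BS" using finG finQ by (auto simp: I_def)
  ultimately have cS: "card ?S = card I + card ?BS" by (simp add: card_Un_disjoint)
  have GQ: "G \<subseteq> Q" by (auto simp: G_def)
  have cQ: "card Q = card G + card (Q - G)"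
    using card_Diff_subset[OF finG GQ] card_mono[OF finQ GQ] by simp
  have cBS: "card ?BS \<le> card (Q - G)" by (rule card_mono) (use finQ in auto)
  define k where "k = length \<tau>"
  define x where "x = real (card I)"
  define y where "y = real (card ?BS)"
  define z where "z = real (card (Q - G))"
  define f where "f = (fact k :: real)"
  have f1: "f \<ge> 1" unfolding f_def by simp
  have qpos: "real (card Q) > 0" using assms(2) finQ by (simp add: card_gt_0_iff)
  have eq: "real (card Q) = f * x + z" unfolding f_def x_def z_def k_def
    using cQ card_G by simp
  have y0: "0 \<le> y" "y \<le> z" using cBS unfolding y_def z_def by auto
  have "real (card ?S) / real (card Q) - 1 / f = (y - z / f) / real (card Q)"
    using qpos f1 unfolding eq by (simp add: cS x_def y_def field_simps)
  moreover have "\<bar>y - z / f\<bar> \<le> z"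
  proof -
    have zz: "z * 1 \<le> z * f" by (rule mult_left_mono[OF f1]) (use y0 in linarith)
    have "0 \<le> z / f" "z / f \<le> z" using y0 f1 zz by (auto simp: divide_le_eq)
    then show ?thesis using y0 by linarith
  qed
  ultimately have "\<bar>real (card ?S) / real (card Q) - 1 / f\<bar> \<le> z / real (card Q)"
    using qpos by (simp add: abs_div divide_right_mono)
  also have "\<dots> \<le> real k ^2 * ((\<Sum>\<psi>\<in>Q. real (num_fixed n \<psi>)) / real n + real (card Q) / (real n - 1))
                    / real (card Q)"
    unfolding z_def k_def using bad_bound[OF assms(1)] qpos by (simp add: divide_right_mono)
  also have "\<dots> = real k ^2 * ((\<Sum>\<psi>\<in>Q. real (num_fixed n \<psi>)) / real (card Q) / real n + 1 / (real n - 1))"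
    using qpos by (simp add: field_simps)
  finally show ?thesis unfolding f_def k_def .
qed

end

theorem theorem2:
  fixes P :: "nat \<Rightarrow> (nat \<Rightarrow> nat) set"
  assumes sub: "\<And>n. P n \<subseteq> {\<phi>. \<phi> permutes {1..n}}"
    and inf: "infinite {n. P n \<noteq> {}}"
    and conj: "\<And>n \<phi> \<sigma>. \<phi> \<in> P n \<Longrightarrow> \<sigma> permutes {1..n} \<Longrightarrow> \<sigma> \<circ> \<phi> \<circ> inv \<sigma> \<in> P n"
    and fix_small: "\<forall>\<epsilon>>0. \<exists>N. \<forall>n\<ge>N. P n \<noteq> {} \<longrightarrow> avg_fixed P n \<le> \<epsilon> * real n"
    and k: "k \<ge> 1"
  shows "\<forall>\<epsilon>>0. \<exists>N. \<forall>n\<ge>N. P n \<noteq> {} \<longrightarrow>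
           (\<forall>\<tau>. length \<tau> = k \<and> distinct \<tau> \<and> set \<tau> \<subseteq> {1..n} \<longrightarrow>
              \<bar>ptilde P n \<tau> - 1 / fact k\<bar> \<le> \<epsilon>)"
proof (intro allI impI)
  fix \<epsilon> :: real assume e: "\<epsilon> > 0"
  define K where "K = real k ^ 2"
  have K1: "K \<ge> 1" unfolding K_def using k by simp
  have e2: "\<epsilon> / (2 * K) > 0" using e K1 by simp
  obtain N1 where N1: "\<forall>n\<ge>N1. P n \<noteq> {} \<longrightarrow> avg_fixed P n \<le> \<epsilon> / (2 * K) * real n"
    using fix_small e2 by blast
  define N2 where "N2 = nat \<lceil>2 * K / \<epsilon>\<rceil> + 2"
  show "\<exists>N. \<forall>n\<ge>N. P n \<noteq> {} \<longrightarrow>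
           (\<forall>\<tau>. length \<tau> = k \<and> distinct \<tau> \<and> set \<tau> \<subseteq> {1..n} \<longrightarrow>
              \<bar>ptilde P n \<tau> - 1 / fact k\<bar> \<le> \<epsilon>)"
  proof (intro exI[of _ "max N1 N2"] allI impI)
    fix n \<tau> assume n: "max N1 N2 \<le> n" and Pn: "P n \<noteq> {}"
      and t: "length \<tau> = k \<and> distinct \<tau> \<and> set \<tau> \<subseteq> {1..n}"
    interpret orb "P n" n \<tau>
      by unfold_locales (use sub conj t in auto)
    have n2: "n \<ge> 2" using n unfolding N2_def by simp
    note bnd = ptilde_bound[OF n2 Pn]
    have avg: "avg_fixed P n \<le> \<epsilon> / (2 * K) * real n" using N1 n Pn by simp
    have a1: "avg_fixed P n / real n \<le> \<epsilon> / (2 * K)"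
      using avg n2 by (simp add: divide_le_eq mult.commute)
    have "2 * K / \<epsilon> \<le> real (nat \<lceil>2 * K / \<epsilon>\<rceil>)" by linarith
    then have "2 * K / \<epsilon> \<le> real n - 1" using n unfolding N2_def by linarith
    then have "2 * K \<le> \<epsilon> * (real n - 1)" using e by (simp add: divide_le_eq mult.commute)
    then have a2: "1 / (real n - 1) \<le> \<epsilon> / (2 * K)"
      using n2 e K1 by (simp add: divide_le_eq le_divide_eq mult.commute)
    have "\<bar>ptilde P n \<tau> - 1 / fact k\<bar> \<le> K * (avg_fixed P n / real n + 1 / (real n - 1))"
      using bnd t unfolding ptilde_def h_def avg_fixed_def K_def by simp
    also have "\<dots> \<le> K * (\<epsilon> / (2 * K) + \<epsilon> / (2 * K))"
      using a1 a2 K1 by (intro mult_left_mono) auto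
    also have "\<dots> = \<epsilon>" using K1 by (simp add: field_simps)
    finally show "\<bar>ptilde P n \<tau> - 1 / fact k\<bar> \<le> \<epsilon>" .
  qed
qed

end
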